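(* Let $\mathcal{H}$ be a finite family of digraphs containing a directed path $P$ of length $p$. For each $H^*\in\mathcal{H}^+_p$, there exists a subgraph $H'\subseteq H^*$ such that $H'\in GPC(P)$.
   Context: Subgraphs are not necessarily induced. For a digraph $H$, $GPC(H)$ is the set of strongly connected digraphs $H\cup P_1\cup\dots\cup P_\ell$ (union of vertex and arc sets) where each $P_i$ is a directed path with both end-points in $V(H)$ and the ordered end-point pairs of the $P_i$ are pairwise distinct; $\{P_1,\dots,P_\ell\}$ is a witnessing collection of paths. $GPC(\mathcal{H})=\bigcup_{H\in\mathcal{H}}GPC(H)$. $\mathcal{H}^-_p$ is the set of digraphs in $GPC(\mathcal{H})$ admitting a witnessing collection of paths all of length at most $p-1$, and $\mathcal{H}^+_p=GPC(\mathcal{H})\setminus\mathcal{H}^-_p$. Path lengths are measured consistently for $P$ and for witnessing paths. *)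

theory Defs
  imports Main
begin

type_synonym 'a dg = "'a set \<times> ('a \<times> 'a) set"

definition verts :: "'a dg \<Rightarrow> 'a set" where "verts G = fst G"
definition arcs :: "'a dg \<Rightarrow> ('a \<times> 'a) set" where "arcs G = snd G"

definition digraph :: "'a dg \<Rightarrow> bool" where
  "digraph G \<longleftrightarrow> finite (verts G) \<and> arcs G \<subseteq> verts G \<times> verts G
     \<and> (\<forall>v. (v, v) \<notin> arcs G)"

definition subgraph :: "'a dg \<Rightarrow> 'a dg \<Rightarrow> bool" where
  "subgraph H G \<longleftrightarrow> verts H \<subseteq> verts G \<and> arcs H \<subseteq> arcs G \<and> arcs H \<subseteq> verts H \<times> verts H"

definition dg_union :: "'a dg \<Rightarrow> 'a dg \<Rightarrow> 'a dg" where
  "dg_union G H = (verts G \<union> verts H, arcs G \<union> arcs H)"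

definition dg_iso :: "'a dg \<Rightarrow> 'a dg \<Rightarrow> bool" where
  "dg_iso G H \<longleftrightarrow> (\<exists>f. bij_betw f (verts G) (verts H)
       \<and> arcs H = (\<lambda>(x, y). (f x, f y)) ` arcs G)"

definition vpath :: "'a list \<Rightarrow> bool" where
  "vpath xs \<longleftrightarrow> xs \<noteq> [] \<and> distinct xs"

definition path_dg :: "'a list \<Rightarrow> 'a dg" where
  "path_dg xs = (set xs, {(xs ! i, xs ! Suc i) | i. Suc i < length xs})"

text \<open>length = number of arcs\<close>
definition plen :: "'a list \<Rightarrow> nat" where
  "plen xs = length xs - 1"

definition is_dipath :: "'a dg \<Rightarrow> nat \<Rightarrow> bool" where
  "is_dipath P p \<longleftrightarrow> (\<exists>xs. vpath xs \<and> P = path_dg xs \<and> plen xs = p)"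

definition strongly_connected :: "'a dg \<Rightarrow> bool" where
  "strongly_connected G \<longleftrightarrow> (\<forall>u\<in>verts G. \<forall>v\<in>verts G. (u, v) \<in> (arcs G)\<^sup>*)"

text \<open>G = H \<union> P_1 \<union> ... \<union> P_l with witnessing collection Ps.\<close>
definition witnessing :: "'a dg \<Rightarrow> 'a dg \<Rightarrow> 'a list list \<Rightarrow> bool" where
  "witnessing H G Ps \<longleftrightarrow>
     (\<forall>xs\<in>set Ps. vpath xs \<and> hd xs \<in> verts H \<and> last xs \<in> verts H)
     \<and> distinct (map (\<lambda>xs. (hd xs, last xs)) Ps)
     \<and> G = foldr (\<lambda>xs K. dg_union K (path_dg xs)) Ps H
     \<and> strongly_connected G"

text \<open>GPC of a family, with digraphs of the family taken up to isomorphism.\<close>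
definition GPC :: "'a dg set \<Rightarrow> 'a dg set" where
  "GPC F = {G. \<exists>H\<in>F. \<exists>H0. dg_iso H H0 \<and> (\<exists>Ps. witnessing H0 G Ps)}"

definition GPC_minus :: "'a dg set \<Rightarrow> nat \<Rightarrow> 'a dg set" where
  "GPC_minus F p = {G. \<exists>H\<in>F. \<exists>H0. dg_iso H H0 \<and>
       (\<exists>Ps. witnessing H0 G Ps \<and> (\<forall>xs\<in>set Ps. plen xs < p))}"

definition GPC_plus :: "'a dg set \<Rightarrow> nat \<Rightarrow> 'a dg set" where
  "GPC_plus F p = GPC F - GPC_minus F p"

end

theory Submission
  imports Defs
begin
definition wk :: "('a \<times> 'a) set \<Rightarrow> 'a list \<Rightarrow> bool" where
  "wk E L \<longleftrightarrow> (\<forall>i. Suc i < length L \<longrightarrow> (L!i, L!Suc i) \<in> E)"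

lemma wk_arcs: "wk E L \<longleftrightarrow> arcs (path_dg L) \<subseteq> E"
  unfolding wk_def arcs_def path_dg_def by auto

lemma distinct_walk:
  assumes "(u,v) \<in> E\<^sup>*"
  shows "\<exists>xs. xs \<noteq> [] \<and> distinct xs \<and> hd xs = u \<and> last xs = v \<and> wk E xs"
  using assms
proof (induction rule: rtrancl_induct)
  case base
  show ?case by (rule exI[of _ "[u]"]) (simp add: wk_def)
next
  case (step y z)
  then obtain xs where xs: "xs \<noteq> []" "distinct xs" "hd xs = u" "last xs = y" "wk E xs" by blast
  show ?case
  proof (cases "z \<in> set xs")
    case True
    then obtain k where k: "k < length xs" "xs!k = z" by (auto simp: in_set_conv_nth)
    show ?thesis
    proof (rule exI[of _ "take (Suc k) xs"], intro conjI)
      show "take (Suc k) xs \<noteq> []" using xs(1) by simp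
      show "distinct (take (Suc k) xs)" using xs(2) by simp
      show "hd (take (Suc k) xs) = u" using xs(1,3) by (simp add: hd_take)
      show "last (take (Suc k) xs) = z" using take_Suc_conv_app_nth[OF k(1)] k(2) by simp
      show "wk E (take (Suc k) xs)" using xs(5) by (simp add: wk_def)
    qed
  next
    case False
    show ?thesis
    proof (rule exI[of _ "xs @ [z]"], intro conjI)
      show "xs @ [z] \<noteq> []" by simp
      show "distinct (xs @ [z])" using xs(2) False by simp
      show "hd (xs @ [z]) = u" using xs(1,3) by simp
      show "last (xs @ [z]) = z" by simp
      show "wk E (xs @ [z])" unfolding wk_def
      proof (intro allI impI)
        fix i assume i: "Suc i < length (xs @ [z])"
        show "((xs @ [z]) ! i, (xs @ [z]) ! Suc i) \<in> E"
        proof (cases "Suc i < length xs")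
          case True then show ?thesis using xs(5) by (simp add: wk_def nth_append)
        next
          case False
          then have "i = length xs - 1" using i by simp
          then show ?thesis using xs(1,4) step(2) False
            by (simp add: nth_append last_conv_nth)
        qed
      qed
    qed
  qed
qed

lemma wk_reach:
  assumes "wk E L" "i \<le> j" "j < length L"
  shows "(L!i, L!j) \<in> E\<^sup>*"
  using assms(2,3)
proof (induction j)
  case 0 then show ?case by simp
next
  case (Suc j)
  show ?case
  proof (cases "i = Suc j")
    case True then show ?thesis by simp
  next
    case False
    then have "(L!i, L!j) \<in> E\<^sup>*" using Suc by simp
    moreover have "(L!j, L!Suc j) \<in> E" using assms(1) Suc.prems unfolding wk_def by simp
    ultimately show ?thesis by simp
  qed
qed

lemma wk_hd: "wk E L \<Longrightarrow> w \<in> set L \<Longrightarrow> (hd L, w) \<in> E\<^sup>*"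
  by (metis hd_conv_nth in_set_conv_nth le0 length_pos_if_in_set list.size(3) not_less0 wk_reach)

lemma wk_last: "wk E L \<Longrightarrow> w \<in> set L \<Longrightarrow> (w, last L) \<in> E\<^sup>*"
proof -
  assume a: "wk E L" "w \<in> set L"
  then obtain i where i: "i < length L" "w = L!i" by (auto simp: in_set_conv_nth)
  have "L \<noteq> []" using a(2) by auto
  then have "last L = L!(length L - 1)" by (simp add: last_conv_nth)
  moreover have "(L!i, L!(length L - 1)) \<in> E\<^sup>*" by (rule wk_reach[OF a(1)]) (use i in auto)
  ultimately show ?thesis using i by simp
qed

lemma wk_mono: "wk E L \<Longrightarrow> E \<subseteq> E' \<Longrightarrow> wk E' L"
  unfolding wk_def by auto

lemma foldr_sub:
  "verts H \<subseteq> verts (foldr (\<lambda>xs K. dg_union K (path_dg xs)) Ps H)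
   \<and> arcs H \<subseteq> arcs (foldr (\<lambda>xs K. dg_union K (path_dg xs)) Ps H)
   \<and> (\<forall>xs\<in>set Ps. verts (path_dg xs) \<subseteq> verts (foldr (\<lambda>xs K. dg_union K (path_dg xs)) Ps H)
       \<and> arcs (path_dg xs) \<subseteq> arcs (foldr (\<lambda>xs K. dg_union K (path_dg xs)) Ps H))"
  by (induction Ps) (auto simp: dg_union_def verts_def arcs_def)

lemma path_closed: "arcs (path_dg L) \<subseteq> verts (path_dg L) \<times> verts (path_dg L)"
  unfolding path_dg_def arcs_def verts_def by auto

lemma foldr_closed:
  "arcs H \<subseteq> verts H \<times> verts H \<Longrightarrow>
   arcs (foldr (\<lambda>xs K. dg_union K (path_dg xs)) Ps H) \<subseteq>
     verts (foldr (\<lambda>xs K. dg_union K (path_dg xs)) Ps H) \<times> verts (foldr (\<lambda>xs K. dg_union K (path_dg xs)) Ps H)"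
proof (induction Ps)
  case Nil then show ?case by simp
next
  case (Cons a Ps)
  then show ?case using path_closed[of a] by (auto simp: dg_union_def verts_def arcs_def)
qed

lemma iso_path:
  assumes "vpath zs" "vpath ys" "length zs = length ys"
  shows "dg_iso (path_dg zs) (path_dg ys)"
proof -
  define n where "n = length zs"
  define g where "g = (!) ys \<circ> inv_into {..<n} ((!) zs)"
  have bz: "bij_betw ((!) zs) {..<n} (set zs)" using assms(1) by (intro bij_betw_nth) (auto simp: vpath_def n_def)
  have by': "bij_betw ((!) ys) {..<n} (set ys)" using assms by (intro bij_betw_nth) (auto simp: vpath_def n_def)
  have bg: "bij_betw g (set zs) (set ys)" unfolding g_def
    by (rule bij_betw_trans[OF bij_betw_inv_into[OF bz] by'])
  have key: "\<And>i. i < n \<Longrightarrow> g (zs!i) = ys!i"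
    using bz unfolding g_def bij_betw_def by simp
  have "arcs (path_dg ys) = (\<lambda>(x, y). (g x, g y)) ` arcs (path_dg zs)"
  proof
    show "arcs (path_dg ys) \<subseteq> (\<lambda>(x, y). (g x, g y)) ` arcs (path_dg zs)"
    proof
      fix e assume "e \<in> arcs (path_dg ys)"
      then obtain i where i: "e = (ys!i, ys!Suc i)" "Suc i < length ys" by (auto simp: path_dg_def arcs_def)
      then have "e = (\<lambda>(x, y). (g x, g y)) (zs!i, zs!Suc i)" using key assms(3) n_def by simp
      moreover have "(zs!i, zs!Suc i) \<in> arcs (path_dg zs)" using i assms(3) by (auto simp: path_dg_def arcs_def)
      ultimately show "e \<in> (\<lambda>(x, y). (g x, g y)) ` arcs (path_dg zs)" by blast
    qed
  next
    show "(\<lambda>(x, y). (g x, g y)) ` arcs (path_dg zs) \<subseteq> arcs (path_dg ys)"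
      using key assms(3) n_def by (auto simp: path_dg_def arcs_def)
  qed
  then show ?thesis using bg unfolding dg_iso_def by (auto simp: verts_def path_dg_def)
qed

theorem lemma24:
  fixes F :: "'a dg set" and P :: "'a dg" and p :: nat
  assumes "finite F"
    and "\<forall>H\<in>F. digraph H"
    and "P \<in> F"
    and "is_dipath P p"
    and "Hs \<in> GPC_plus F p"
  shows "\<exists>H'. subgraph H' Hs \<and> H' \<in> GPC {P}"
proof -
  have inG: "Hs \<in> GPC F" and notm: "Hs \<notin> GPC_minus F p" using assms(5) by (auto simp: GPC_plus_def)
  obtain H H0 Ps where H: "H \<in> F" "dg_iso H H0" "witnessing H0 Hs Ps"
    using inG by (auto simp: GPC_def)
  have W: "\<forall>xs\<in>set Ps. vpath xs \<and> hd xs \<in> verts H0 \<and> last xs \<in> verts H0"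
    "Hs = foldr (\<lambda>xs K. dg_union K (path_dg xs)) Ps H0" "strongly_connected Hs"
    using H(3) by (auto simp: witnessing_def)
  have "\<exists>xs\<in>set Ps. p \<le> plen xs"
  proof (rule ccontr)
    assume "\<not> ?thesis"
    then have "\<forall>xs\<in>set Ps. plen xs < p" by auto
    then have "Hs \<in> GPC_minus F p" using H unfolding GPC_minus_def by blast
    then show False using notm by simp
  qed
  then obtain xs where xs: "xs \<in> set Ps" "p \<le> plen xs" by blast
  have vx: "vpath xs" using W(1) xs(1) by blast
  have lx: "Suc p \<le> length xs" proof -
    have "xs \<noteq> []" using vx by (simp add: vpath_def)
    then have "length xs > 0" by simp
    then show ?thesis using xs(2) unfolding plen_def by linarith
  qed
  define ys where "ys = take (Suc p) xs"
  have ly: "length ys = Suc p" using lx ys_def by simp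
  have vy: "vpath ys" using vx ly by (auto simp: vpath_def ys_def)
  have dH: "digraph H" using assms(2) H(1) by blast
  have cH0: "arcs H0 \<subseteq> verts H0 \<times> verts H0"
  proof -
    obtain f where f: "bij_betw f (verts H) (verts H0)" "arcs H0 = (\<lambda>(x, y). (f x, f y)) ` arcs H"
      using H(2) by (auto simp: dg_iso_def)
    have "arcs H \<subseteq> verts H \<times> verts H" using dH by (simp add: digraph_def)
    then show ?thesis using f by (auto simp: bij_betw_def)
  qed
  have cHs: "arcs Hs \<subseteq> verts Hs \<times> verts Hs" using foldr_closed[OF cH0] W(2) by simp
  have subx: "verts (path_dg xs) \<subseteq> verts Hs" "arcs (path_dg xs) \<subseteq> arcs Hs"
    using foldr_sub[of H0 Ps] xs(1) W(2) by auto
  have ys_v: "set ys \<subseteq> verts Hs" using subx(1) by (auto simp: ys_def path_dg_def verts_def dest: in_set_takeD)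
  have ys_w: "wk (arcs Hs) ys"
  proof -
    have "wk (arcs Hs) xs" using subx(2) wk_arcs by blast
    then show ?thesis by (simp add: wk_def ys_def)
  qed
  have "last ys \<in> verts Hs" "hd ys \<in> verts Hs" using ys_v vy by (auto simp: vpath_def)
  then have "(last ys, hd ys) \<in> (arcs Hs)\<^sup>*" using W(3) by (simp add: strongly_connected_def)
  from distinct_walk[OF this] obtain Q where Q0: "Q \<noteq> [] \<and> distinct Q \<and> hd Q = last ys \<and> last Q = hd ys \<and> wk (arcs Hs) Q"
    ..
  then have Q: "Q \<noteq> []" "distinct Q" "hd Q = last ys" "last Q = hd ys" "wk (arcs Hs) Q"
    using Q0 by auto
  have Q_v: "set Q \<subseteq> verts Hs"
  proof
    fix w assume "w \<in> set Q"
    then obtain i where i: "i < length Q" "w = Q!i" by (auto simp: in_set_conv_nth)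
    show "w \<in> verts Hs"
    proof (cases i)
      case 0 then show ?thesis using i Q(1,3) \<open>last ys \<in> verts Hs\<close> by (simp add: hd_conv_nth)
    next
      case (Suc k)
      then have "(Q!k, Q!i) \<in> arcs Hs" using Q(5) i unfolding wk_def by simp
      then show ?thesis using cHs i by auto
    qed
  qed
  define H' where "H' = dg_union (path_dg ys) (path_dg Q)"
  have vH': "verts H' = set ys \<union> set Q" by (simp add: H'_def dg_union_def verts_def path_dg_def)
  have aH': "arcs H' = arcs (path_dg ys) \<union> arcs (path_dg Q)" by (simp add: H'_def dg_union_def arcs_def)
  have sub: "subgraph H' Hs"
    unfolding subgraph_def
  proof (intro conjI)
    show "verts H' \<subseteq> verts Hs" using vH' ys_v Q_v by auto
    show "arcs H' \<subseteq> arcs Hs" using aH' ys_w Q(5) wk_arcs by blast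
    show "arcs H' \<subseteq> verts H' \<times> verts H'" using aH' vH' path_closed[of ys] path_closed[of Q]
      by (auto simp: verts_def path_dg_def)
  qed
  have wy: "wk (arcs H') ys" and wq: "wk (arcs H') Q" using aH' wk_arcs by blast+
  have reach: "\<And>w. w \<in> verts H' \<Longrightarrow> (hd ys, w) \<in> (arcs H')\<^sup>* \<and> (w, hd ys) \<in> (arcs H')\<^sup>*"
  proof -
    fix w assume "w \<in> verts H'"
    then consider "w \<in> set ys" | "w \<in> set Q" using vH' by auto
    then show "(hd ys, w) \<in> (arcs H')\<^sup>* \<and> (w, hd ys) \<in> (arcs H')\<^sup>*"
    proof cases
      case 1
      have a1: "(w, last ys) \<in> (arcs H')\<^sup>*" using wk_last[OF wy 1] .
      have a2: "(hd Q, last Q) \<in> (arcs H')\<^sup>*" using wk_hd[OF wq] Q(1) last_in_set by blast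
      have a3: "(w, hd ys) \<in> (arcs H')\<^sup>*" using rtrancl_trans[OF a1 a2[unfolded Q(3,4)]] .
      show ?thesis using wk_hd[OF wy 1] a3 by (rule conjI)
    next
      case 2
      have a1: "(hd Q, w) \<in> (arcs H')\<^sup>*" using wk_hd[OF wq 2] .
      have a2: "(hd ys, last ys) \<in> (arcs H')\<^sup>*" using wk_last[OF wy] vy
        by (simp add: vpath_def)
      have a3: "(w, last Q) \<in> (arcs H')\<^sup>*" using wk_last[OF wq 2] .
      have "(hd ys, w) \<in> (arcs H')\<^sup>*" using rtrancl_trans[OF a2 a1[unfolded Q(3)]] .
      then show ?thesis using a3 Q(4) by simp
    qed
  qed
  have sc: "strongly_connected H'" unfolding strongly_connected_def
  proof (intro ballI)
    fix u v assume "u \<in> verts H'" "v \<in> verts H'"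
    then have "(u, hd ys) \<in> (arcs H')\<^sup>*" "(hd ys, v) \<in> (arcs H')\<^sup>*" using reach by blast+
    then show "(u, v) \<in> (arcs H')\<^sup>*" by (rule rtrancl_trans)
  qed
  obtain zs where zs: "vpath zs" "P = path_dg zs" "plen zs = p" using assms(4) by (auto simp: is_dipath_def)
  have lz: "length zs = Suc p" using zs(1,3) by (auto simp: plen_def vpath_def)
  have iso: "dg_iso P (path_dg ys)" using iso_path[OF zs(1) vy] lz ly zs(2) by simp
  have wit: "witnessing (path_dg ys) H' [Q]"
    unfolding witnessing_def
  proof (intro conjI)
    show "\<forall>xs\<in>set [Q]. vpath xs \<and> hd xs \<in> verts (path_dg ys) \<and> last xs \<in> verts (path_dg ys)"
      using Q vy by (auto simp: vpath_def verts_def path_dg_def)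
    show "distinct (map (\<lambda>xs. (hd xs, last xs)) [Q])" by simp
    show "H' = foldr (\<lambda>xs K. dg_union K (path_dg xs)) [Q] (path_dg ys)" by (simp add: H'_def)
    show "strongly_connected H'" by (rule sc)
  qed
  have "H' \<in> GPC {P}" unfolding GPC_def using iso wit by blast
  then show ?thesis using sub by blast
qed

end
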